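(* Let $(\Omega,\mathcal G,\alpha)$ be a dynamical system. The following are equivalent: (i) $(\Omega,\mathcal G,\alpha)$ is minimal; (ii) $\Omega=\Omega_{\mathrm{PE}}$; (iii) $\Omega_{\mathrm{PE}}$ is closed and non-empty.
   Context: $(\mathcal G,+)$ is a countably infinite discrete group (written additively, not necessarily abelian). A dynamical system $(\Omega,\mathcal G,\alpha)$ consists of a compact metric space $\Omega$ and a map $\alpha$ from $\mathcal G$ to the homeomorphisms of $\Omega$ with $\alpha(g+h)=\alpha(g)\circ\alpha(h)$. It is minimal if every orbit $\{\alpha(g)(\omega):g\in\mathcal G\}$ is dense in $\Omega$. A sequence $(g_n)$ satisfies $g_n\to\infty$ if it eventually leaves every finite subset of $\mathcal G$. $L(\omega)=\{\nu\in\Omega:\exists (g_n),\ g_n\to\infty,\ \alpha(g_n)(\omega)\to\nu\}$; $\omega$ is pseudoergodic if $L(\omega)=\Omega$, and $\Omega_{\mathrm{PE}}$ denotes the set of pseudoergodic elements. *)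

theory Defs
  imports "HOL-Analysis.Analysis"
begin

definition dynamical_system :: "'a::metric_space set \<Rightarrow> ('g::group_add \<Rightarrow> 'a \<Rightarrow> 'a) \<Rightarrow> bool" where
  "dynamical_system \<Omega> \<alpha> \<longleftrightarrow>
     countable (UNIV :: 'g set) \<and> infinite (UNIV :: 'g set) \<and>
     compact \<Omega> \<and>
     (\<forall>g. \<exists>h. homeomorphism \<Omega> \<Omega> (\<alpha> g) h) \<and>
     (\<forall>g h. \<forall>x\<in>\<Omega>. \<alpha> (g + h) x = \<alpha> g (\<alpha> h x))"

definition orbit :: "('g \<Rightarrow> 'a \<Rightarrow> 'a) \<Rightarrow> 'a \<Rightarrow> 'a set" where
  "orbit \<alpha> \<omega> = {\<alpha> g \<omega> | g. True}"

definition minimal :: "'a::topological_space set \<Rightarrow> ('g \<Rightarrow> 'a \<Rightarrow> 'a) \<Rightarrow> bool" where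
  "minimal \<Omega> \<alpha> \<longleftrightarrow> (\<forall>\<omega>\<in>\<Omega>. \<Omega> \<subseteq> closure (orbit \<alpha> \<omega>))"

definition tends_to_infinity :: "(nat \<Rightarrow> 'g) \<Rightarrow> bool" where
  "tends_to_infinity gs \<longleftrightarrow> (\<forall>F. finite F \<longrightarrow> (\<forall>\<^sub>F n in sequentially. gs n \<notin> F))"

definition limit_set :: "'a::topological_space set \<Rightarrow> ('g \<Rightarrow> 'a \<Rightarrow> 'a) \<Rightarrow> 'a \<Rightarrow> 'a set" where
  "limit_set \<Omega> \<alpha> \<omega> = {\<nu>\<in>\<Omega>. \<exists>gs. tends_to_infinity gs \<and> (\<lambda>n. \<alpha> (gs n) \<omega>) \<longlonglongrightarrow> \<nu>}"

definition pseudoergodic :: "'a::topological_space set \<Rightarrow> ('g \<Rightarrow> 'a \<Rightarrow> 'a) \<Rightarrow> 'a \<Rightarrow> bool" where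
  "pseudoergodic \<Omega> \<alpha> \<omega> \<longleftrightarrow> limit_set \<Omega> \<alpha> \<omega> = \<Omega>"

definition PE_set :: "'a::topological_space set \<Rightarrow> ('g \<Rightarrow> 'a \<Rightarrow> 'a) \<Rightarrow> 'a set" where
  "PE_set \<Omega> \<alpha> = {\<omega>\<in>\<Omega>. pseudoergodic \<Omega> \<alpha> \<omega>}"

end

theory Submission
  imports Defs
begin

definition CC :: "'a::metric_space set \<Rightarrow> ('g \<Rightarrow> 'a \<Rightarrow> 'a) \<Rightarrow> 'a \<Rightarrow> 'a set" where
  "CC \<Omega> \<alpha> \<omega> = {\<nu>\<in>\<Omega>. \<forall>F. finite F \<longrightarrow> (\<forall>e>0. \<exists>g. g \<notin> F \<and> dist (\<alpha> g \<omega>) \<nu> < e)}"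

lemma ds_maps:
  assumes "dynamical_system \<Omega> \<alpha>" "x \<in> \<Omega>"
  shows "\<alpha> g x \<in> \<Omega>"
proof -
  obtain h where "homeomorphism \<Omega> \<Omega> (\<alpha> g) h" using assms(1) unfolding dynamical_system_def by blast
  then show ?thesis using assms(2) unfolding homeomorphism_def by blast
qed

lemma ds_cont:
  assumes "dynamical_system \<Omega> \<alpha>"
  shows "continuous_on \<Omega> (\<alpha> g)"
proof -
  obtain h where "homeomorphism \<Omega> \<Omega> (\<alpha> g) h" using assms(1) unfolding dynamical_system_def by blast
  then show ?thesis unfolding homeomorphism_def by blast
qed

lemma CC_sub_limit:
  fixes \<Omega> :: "'a::metric_space set" and \<alpha> :: "'g::group_add \<Rightarrow> 'a \<Rightarrow> 'a"
  assumes ds: "dynamical_system \<Omega> \<alpha>" and nu: "\<nu> \<in> CC \<Omega> \<alpha> \<omega>"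
  shows "\<nu> \<in> limit_set \<Omega> \<alpha> \<omega>"
proof -
  have "countable (UNIV::'g set)" "infinite (UNIV::'g set)" using ds unfolding dynamical_system_def by auto
  then obtain e :: "'g \<Rightarrow> nat" where b: "bij_betw e UNIV UNIV" by (rule countableE_infinite)
  hence inj: "inj e" by (simp add: bij_betw_def)
  have fin: "finite {f. e f < n}" for n
    using finite_vimageI[OF finite_lessThan[of n] inj] by (simp add: vimage_def)
  have "\<forall>n. \<exists>g. g \<notin> {f. e f < n} \<and> dist (\<alpha> g \<omega>) \<nu> < 1 / (real n + 1)"
  proof
    fix n
    have p: "1 / (real n + 1) > 0" by simp
    have "\<forall>F. finite F \<longrightarrow> (\<forall>e>0. \<exists>g. g \<notin> F \<and> dist (\<alpha> g \<omega>) \<nu> < e)"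
      using nu unfolding CC_def by blast
    then show "\<exists>g. g \<notin> {f. e f < n} \<and> dist (\<alpha> g \<omega>) \<nu> < 1 / (real n + 1)"
      using fin[of n] p by blast
  qed
  then obtain gs where gs: "\<And>n. e (gs n) \<ge> n" "\<And>n. dist (\<alpha> (gs n) \<omega>) \<nu> < 1 / (real n + 1)"
    by (metis (mono_tags, lifting) mem_Collect_eq not_le)
  have "tends_to_infinity gs"
    unfolding tends_to_infinity_def
  proof (intro allI impI)
    fix F :: "'g set" assume "finite F"
    then obtain k where k: "e ` F \<subseteq> {..<k}" using finite_nat_bounded by blast
    show "\<forall>\<^sub>F n in sequentially. gs n \<notin> F"
      unfolding eventually_sequentially
    proof (intro exI[of _ k] allI impI)
      fix n assume "k \<le> n"
      then show "gs n \<notin> F" using gs(1)[of n] k by force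
    qed
  qed
  moreover have "(\<lambda>n. \<alpha> (gs n) \<omega>) \<longlonglongrightarrow> \<nu>"
    unfolding lim_sequentially
  proof (intro allI impI)
    fix r :: real assume "r > 0"
    then obtain N :: nat where N: "1 / r < real N" using reals_Archimedean2 by blast
    show "\<exists>no. \<forall>n\<ge>no. dist (\<alpha> (gs n) \<omega>) \<nu> < r"
    proof (intro exI[of _ N] allI impI)
      fix n assume "N \<le> n"
      have "1 / (real n + 1) < r"
      proof -
        have m: "1 / r < real n + 1" using N \<open>N \<le> n\<close> by linarith
        hence "1 < (real n + 1) * r" using \<open>r>0\<close> by (simp add: pos_divide_less_eq)
        thus ?thesis by (simp add: divide_less_eq mult.commute)
      qed
      then show "dist (\<alpha> (gs n) \<omega>) \<nu> < r" using gs(2)[of n] by linarith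
    qed
  qed
  ultimately show ?thesis using nu unfolding limit_set_def CC_def by blast
qed

lemma CC_nonempty:
  fixes \<Omega> :: "'a::metric_space set" and \<alpha> :: "'g::group_add \<Rightarrow> 'a \<Rightarrow> 'a"
  assumes ds: "dynamical_system \<Omega> \<alpha>" and om: "\<omega> \<in> \<Omega>"
  shows "CC \<Omega> \<alpha> \<omega> \<noteq> {}"
proof
  assume E: "CC \<Omega> \<alpha> \<omega> = {}"
  have "\<forall>\<nu>\<in>\<Omega>. \<exists>F d. finite F \<and> d > 0 \<and> (\<forall>g. g \<notin> F \<longrightarrow> dist (\<alpha> g \<omega>) \<nu> \<ge> d)"
  proof
    fix \<nu> assume "\<nu> \<in> \<Omega>"
    hence "\<nu> \<notin> CC \<Omega> \<alpha> \<omega>" using E by auto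
    then show "\<exists>F d. finite F \<and> d > 0 \<and> (\<forall>g. g \<notin> F \<longrightarrow> dist (\<alpha> g \<omega>) \<nu> \<ge> d)"
      using \<open>\<nu> \<in> \<Omega>\<close> unfolding CC_def by (auto simp: not_less)
  qed
  then obtain FF dd where FF: "\<And>\<nu>. \<nu> \<in> \<Omega> \<Longrightarrow> finite (FF \<nu>) \<and> dd \<nu> > 0 \<and> (\<forall>g. g \<notin> FF \<nu> \<longrightarrow> dist (\<alpha> g \<omega>) \<nu> \<ge> dd \<nu>)"
    by metis
  have cpt: "compact \<Omega>" using ds unfolding dynamical_system_def by auto
  have "\<Omega> \<subseteq> (\<Union>\<nu>\<in>\<Omega>. ball \<nu> (dd \<nu>))" using FF by fastforce
  then obtain K where K: "K \<subseteq> \<Omega>" "finite K" "\<Omega> \<subseteq> (\<Union>\<nu>\<in>K. ball \<nu> (dd \<nu>))"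
    using compactE_image[OF cpt, of \<Omega> "\<lambda>\<nu>. ball \<nu> (dd \<nu>)"] by blast
  have "UNIV \<subseteq> (\<Union>\<nu>\<in>K. FF \<nu>)"
  proof
    fix g
    have "\<alpha> g \<omega> \<in> \<Omega>" using ds_maps[OF ds om] .
    then obtain \<nu> where "\<nu> \<in> K" "dist \<nu> (\<alpha> g \<omega>) < dd \<nu>" using K(3) by auto
    moreover have "\<nu> \<in> \<Omega>" using \<open>\<nu> \<in> K\<close> K(1) by blast
    ultimately have "g \<in> FF \<nu>" using FF[of \<nu>] by (auto simp: dist_commute not_le)
    then show "g \<in> (\<Union>\<nu>\<in>K. FF \<nu>)" using \<open>\<nu> \<in> K\<close> by blast
  qed
  moreover have "finite (\<Union>\<nu>\<in>K. FF \<nu>)" using K FF by auto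
  ultimately have "finite (UNIV :: 'g set)" using finite_subset by blast
  then show False using ds unfolding dynamical_system_def by auto
qed

lemma CC_invariant:
  fixes \<Omega> :: "'a::metric_space set" and \<alpha> :: "'g::group_add \<Rightarrow> 'a \<Rightarrow> 'a"
  assumes ds: "dynamical_system \<Omega> \<alpha>" and om: "\<omega> \<in> \<Omega>" and nu: "\<nu> \<in> CC \<Omega> \<alpha> \<omega>"
  shows "\<alpha> h \<nu> \<in> CC \<Omega> \<alpha> \<omega>"
proof -
  have nuO: "\<nu> \<in> \<Omega>" using nu unfolding CC_def by auto
  have "\<forall>F. finite F \<longrightarrow> (\<forall>e>0. \<exists>g. g \<notin> F \<and> dist (\<alpha> g \<omega>) (\<alpha> h \<nu>) < e)"
  proof (intro allI impI)
    fix F :: "'g set" and e :: real assume F: "finite F" and e: "e > 0"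
    have "continuous_on \<Omega> (\<alpha> h)" using ds_cont[OF ds] .
    then obtain d where d: "d > 0" "\<And>y. y \<in> \<Omega> \<Longrightarrow> dist y \<nu> < d \<Longrightarrow> dist (\<alpha> h y) (\<alpha> h \<nu>) < e"
      using nuO e unfolding continuous_on_iff by metis
    have "finite ((\<lambda>f. - h + f) ` F)" using F by auto
    then obtain g where g: "g \<notin> (\<lambda>f. - h + f) ` F" "dist (\<alpha> g \<omega>) \<nu> < d"
      using nu d(1) unfolding CC_def by blast
    have "h + g \<notin> F"
    proof
      assume "h + g \<in> F"
      hence "- h + (h + g) \<in> (\<lambda>f. - h + f) ` F" by blast
      thus False using g(1) by (simp add: add.assoc[symmetric])
    qed
    moreover have "\<alpha> (h + g) \<omega> = \<alpha> h (\<alpha> g \<omega>)" using ds om unfolding dynamical_system_def by blast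
    moreover have "dist (\<alpha> h (\<alpha> g \<omega>)) (\<alpha> h \<nu>) < e" using d(2)[OF ds_maps[OF ds om] g(2)] .
    ultimately show "\<exists>g. g \<notin> F \<and> dist (\<alpha> g \<omega>) (\<alpha> h \<nu>) < e" by metis
  qed
  then show ?thesis using ds_maps[OF ds nuO] unfolding CC_def by blast
qed

lemma CC_closed:
  fixes \<Omega> :: "'a::metric_space set" and \<alpha> :: "'g::group_add \<Rightarrow> 'a \<Rightarrow> 'a"
  assumes ds: "dynamical_system \<Omega> \<alpha>"
  shows "closure (CC \<Omega> \<alpha> \<omega>) \<subseteq> CC \<Omega> \<alpha> \<omega>"
proof
  fix \<nu> assume nu: "\<nu> \<in> closure (CC \<Omega> \<alpha> \<omega>)"
  have "closed \<Omega>" using ds unfolding dynamical_system_def by (auto intro: compact_imp_closed)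
  moreover have "CC \<Omega> \<alpha> \<omega> \<subseteq> \<Omega>" unfolding CC_def by auto
  ultimately have "\<nu> \<in> \<Omega>" using nu closure_minimal by blast
  moreover have "\<forall>F. finite F \<longrightarrow> (\<forall>e>0. \<exists>g. g \<notin> F \<and> dist (\<alpha> g \<omega>) \<nu> < e)"
  proof (intro allI impI)
    fix F :: "'g set" and e :: real assume F: "finite F" and e: "e > 0"
    obtain \<mu> where mu: "\<mu> \<in> CC \<Omega> \<alpha> \<omega>" "dist \<mu> \<nu> < e/2"
      using nu e unfolding closure_approachable by (meson half_gt_zero)
    have "e/2 > 0" using e by simp
    then obtain g where "g \<notin> F" "dist (\<alpha> g \<omega>) \<mu> < e/2" using F mu(1) unfolding CC_def
      by blast
    then show "\<exists>g. g \<notin> F \<and> dist (\<alpha> g \<omega>) \<nu> < e"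
      using mu(2) dist_triangle[of "\<alpha> g \<omega>" \<nu> \<mu>] by (intro exI[of _ g]) auto
  qed
  ultimately show "\<nu> \<in> CC \<Omega> \<alpha> \<omega>" unfolding CC_def by blast
qed

lemma minimal_PE:
  fixes \<Omega> :: "'a::metric_space set" and \<alpha> :: "'g::group_add \<Rightarrow> 'a \<Rightarrow> 'a"
  assumes ds: "dynamical_system \<Omega> \<alpha>" and m: "minimal \<Omega> \<alpha>" and om: "\<omega> \<in> \<Omega>"
  shows "pseudoergodic \<Omega> \<alpha> \<omega>"
proof -
  obtain \<nu> where nu: "\<nu> \<in> CC \<Omega> \<alpha> \<omega>" using CC_nonempty[OF ds om] by blast
  hence "\<nu> \<in> \<Omega>" unfolding CC_def by auto
  hence "\<Omega> \<subseteq> closure (orbit \<alpha> \<nu>)" using m unfolding minimal_def by auto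
  moreover have "orbit \<alpha> \<nu> \<subseteq> CC \<Omega> \<alpha> \<omega>" unfolding orbit_def using CC_invariant[OF ds om nu] by auto
  ultimately have "\<Omega> \<subseteq> CC \<Omega> \<alpha> \<omega>" using CC_closed[OF ds] closure_mono by blast
  hence "\<Omega> \<subseteq> limit_set \<Omega> \<alpha> \<omega>" using CC_sub_limit[OF ds] by blast
  then show ?thesis unfolding pseudoergodic_def limit_set_def by blast
qed

lemma PE_closure:
  fixes \<Omega> :: "'a::metric_space set"
  assumes "pseudoergodic \<Omega> \<alpha> \<omega>"
  shows "\<Omega> \<subseteq> closure (orbit \<alpha> \<omega>)"
proof
  fix \<nu> assume "\<nu> \<in> \<Omega>"
  then obtain gs where "(\<lambda>n. \<alpha> (gs n) \<omega>) \<longlonglongrightarrow> \<nu>"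
    using assms unfolding pseudoergodic_def limit_set_def by blast
  moreover have "\<forall>n. \<alpha> (gs n) \<omega> \<in> orbit \<alpha> \<omega>" unfolding orbit_def by blast
  ultimately show "\<nu> \<in> closure (orbit \<alpha> \<omega>)" unfolding closure_sequential by (intro exI[of _ "\<lambda>n. \<alpha> (gs n) \<omega>"]) simp
qed

lemma PE_invariant:
  fixes \<Omega> :: "'a::metric_space set" and \<alpha> :: "'g::group_add \<Rightarrow> 'a \<Rightarrow> 'a"
  assumes ds: "dynamical_system \<Omega> \<alpha>" and om: "\<omega> \<in> \<Omega>" and pe: "pseudoergodic \<Omega> \<alpha> \<omega>"
  shows "pseudoergodic \<Omega> \<alpha> (\<alpha> h \<omega>)"
  unfolding pseudoergodic_def
proof
  show "limit_set \<Omega> \<alpha> (\<alpha> h \<omega>) \<subseteq> \<Omega>" unfolding limit_set_def by auto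
  show "\<Omega> \<subseteq> limit_set \<Omega> \<alpha> (\<alpha> h \<omega>)"
  proof
    fix \<nu> assume nu: "\<nu> \<in> \<Omega>"
    then obtain gs where gs: "tends_to_infinity gs" "(\<lambda>n. \<alpha> (gs n) \<omega>) \<longlonglongrightarrow> \<nu>"
      using pe unfolding pseudoergodic_def limit_set_def by blast
    have "tends_to_infinity (\<lambda>n. gs n - h)"
      unfolding tends_to_infinity_def
    proof (intro allI impI)
      fix F :: "'g set" assume "finite F"
      hence "finite ((\<lambda>f. f + h) ` F)" by auto
      hence "\<forall>\<^sub>F n in sequentially. gs n \<notin> (\<lambda>f. f + h) ` F" using gs(1) unfolding tends_to_infinity_def by blast
      then show "\<forall>\<^sub>F n in sequentially. gs n - h \<notin> F"
        by (rule eventually_mono) (metis diff_add_cancel image_eqI)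
    qed
    moreover have "\<alpha> (gs n - h) (\<alpha> h \<omega>) = \<alpha> (gs n) \<omega>" for n
      using ds om unfolding dynamical_system_def by (metis diff_add_cancel)
    ultimately show "\<nu> \<in> limit_set \<Omega> \<alpha> (\<alpha> h \<omega>)" using gs(2) nu unfolding limit_set_def by auto
  qed
qed

theorem proposition3p6:
  fixes \<Omega> :: "'a::metric_space set" and \<alpha> :: "'g::group_add \<Rightarrow> 'a \<Rightarrow> 'a"
  assumes "dynamical_system \<Omega> \<alpha>" and "\<Omega> \<noteq> {}"
  shows "(minimal \<Omega> \<alpha> \<longleftrightarrow> \<Omega> = PE_set \<Omega> \<alpha>) \<and>
         (\<Omega> = PE_set \<Omega> \<alpha> \<longleftrightarrow> closedin (top_of_set \<Omega>) (PE_set \<Omega> \<alpha>) \<and> PE_set \<Omega> \<alpha> \<noteq> {})"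
proof -
  note ds = assms(1)
  have cl: "closed \<Omega>" using ds unfolding dynamical_system_def by (auto intro: compact_imp_closed)
  have A: "minimal \<Omega> \<alpha> \<longleftrightarrow> \<Omega> = PE_set \<Omega> \<alpha>"
  proof
    assume "minimal \<Omega> \<alpha>"
    then show "\<Omega> = PE_set \<Omega> \<alpha>" using minimal_PE[OF ds] unfolding PE_set_def by auto
  next
    assume "\<Omega> = PE_set \<Omega> \<alpha>"
    then show "minimal \<Omega> \<alpha>" unfolding minimal_def PE_set_def using PE_closure by blast
  qed
  have B: "\<Omega> = PE_set \<Omega> \<alpha> \<longleftrightarrow> closedin (top_of_set \<Omega>) (PE_set \<Omega> \<alpha>) \<and> PE_set \<Omega> \<alpha> \<noteq> {}"
  proof
    assume "\<Omega> = PE_set \<Omega> \<alpha>"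
    then show "closedin (top_of_set \<Omega>) (PE_set \<Omega> \<alpha>) \<and> PE_set \<Omega> \<alpha> \<noteq> {}"
      using assms(2) by (metis closedin_topspace topspace_euclidean_subtopology)
  next
    assume H: "closedin (top_of_set \<Omega>) (PE_set \<Omega> \<alpha>) \<and> PE_set \<Omega> \<alpha> \<noteq> {}"
    then obtain \<omega> where om: "\<omega> \<in> PE_set \<Omega> \<alpha>" by blast
    have clP: "closed (PE_set \<Omega> \<alpha>)" using H cl closedin_closed_trans by blast
    have "orbit \<alpha> \<omega> \<subseteq> PE_set \<Omega> \<alpha>"
      using om PE_invariant[OF ds] ds_maps[OF ds] unfolding orbit_def PE_set_def by auto
    hence "closure (orbit \<alpha> \<omega>) \<subseteq> PE_set \<Omega> \<alpha>" using clP closure_minimal by blast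
    moreover have "\<Omega> \<subseteq> closure (orbit \<alpha> \<omega>)" using om PE_closure unfolding PE_set_def by blast
    ultimately show "\<Omega> = PE_set \<Omega> \<alpha>" unfolding PE_set_def by blast
  qed
  show ?thesis using A B by blast
qed

end
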